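(* There is a constant $C$ depending only on $n$ such that the following holds. Let $u$ be a function on $\mathbb{R}^n\times(-\infty,0]$ with $\int_{S_\rho}u^2\,d\bar\gamma<\infty$ for all $\rho>0$, and suppose $P_1\in\mathcal P_{\mathrm{sing}}$ satisfies $N_{\mathrm{sing}}(u,1)=\big(\int_{S_1}|u-P_1|^2\,d\bar\gamma\big)^{1/2}$. Then for every $\rho\ge1$, $$\Big(\frac{1}{\rho^4}\int_{S_\rho}|u-P_1|^2\,d\bar\gamma\Big)^{1/2}\le C\int_1^{2\rho}\frac{M_{\mathrm{sing}}(u,s)}{s}\,ds,$$ and for every $\rho\le1$, $$\Big(\frac{1}{\rho^4}\int_{S_\rho}|u-P_1|^2\,d\bar\gamma\Big)^{1/2}\le C\int_{2\rho}^3\frac{M_{\mathrm{sing}}(u,s)}{s}\,ds.$$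
   Context: Notation. $S_r=\mathbb{R}^n\times(-r^2,0]$; $G(x,t)=(4\pi t)^{-n/2}e^{-|x|^2/(4t)}$ for $t>0$; $d\bar\gamma=\frac{G(x,-t)}{-t}\,dx\,dt$ on $\mathbb{R}^n\times(-\infty,0)$. $\mathcal P_{\mathrm{sing}}$: the set of functions $P(x,t)=\frac12x^TQx+mt$ with $Q$ a symmetric $n\times n$ matrix, $m\in[-1,0]$, $P\ge0$ on $\mathbb{R}^n\times(-\infty,0]$, $\Delta P-P_t=1$. $N_{\mathrm{sing}}(u,\rho)=\inf_{P\in\mathcal P_{\mathrm{sing}}}\big(\rho^{-4}\int_{S_\rho}|u-P|^2\,d\bar\gamma\big)^{1/2}$ and $M_{\mathrm{sing}}(u,\rho)=\sup_{r\in(0,\rho]}N_{\mathrm{sing}}(u,r)$. *)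

theory Defs
  imports "HOL-Analysis.Analysis"
begin

text \<open>Points of space-time are pairs (x,t) with x in R^n (n = CARD('n)) and t real.\<close>

definition heat_kernel :: "real ^ 'n \<Rightarrow> real \<Rightarrow> real" where
  "heat_kernel x t = (if t > 0 then (4 * pi * t) powr (- real CARD('n) / 2) * exp (- (norm x)\<^sup>2 / (4 * t)) else 0)"

definition gamma_bar :: "((real ^ 'n) \<times> real) measure" where
  "gamma_bar = density lebesgue
     (\<lambda>(x, t). if t < 0 then ennreal (heat_kernel x (- t) / (- t)) else 0)"

definition S_cyl :: "real \<Rightarrow> ((real ^ 'n) \<times> real) set" where
  "S_cyl r = {(x, t). - (r\<^sup>2) < t \<and> t \<le> 0}"

definition enn_sqrt :: "ennreal \<Rightarrow> ennreal" where
  "enn_sqrt a = (if a = \<infinity> then \<infinity> else ennreal (sqrt (enn2real a)))"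

definition laplacian_x :: "((real ^ 'n) \<times> real \<Rightarrow> real) \<Rightarrow> real ^ 'n \<Rightarrow> real \<Rightarrow> real" where
  "laplacian_x f x t = (\<Sum>i\<in>UNIV. deriv (deriv (\<lambda>s. f (x + s *\<^sub>R axis i 1, t))) 0)"

definition time_deriv :: "((real ^ 'n) \<times> real \<Rightarrow> real) \<Rightarrow> real ^ 'n \<Rightarrow> real \<Rightarrow> real" where
  "time_deriv f x t = deriv (\<lambda>s. f (x, s)) t"

definition P_sing :: "((real ^ 'n) \<times> real \<Rightarrow> real) set" where
  "P_sing = {P. \<exists>(Q :: real ^ 'n ^ 'n) (m :: real).
      transpose Q = Q \<and>
      P = (\<lambda>(x, t). (1/2) * (x \<bullet> (Q *v x)) + m * t) \<and>
      m \<in> {-1..0} \<and>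
      (\<forall>x t. t \<le> 0 \<longrightarrow> P (x, t) \<ge> 0) \<and>
      (\<forall>x t. laplacian_x P x t - time_deriv P x t = 1)}"

definition weighted_dist :: "((real ^ 'n) \<times> real \<Rightarrow> real) \<Rightarrow> ((real ^ 'n) \<times> real \<Rightarrow> real) \<Rightarrow> real \<Rightarrow> ennreal" where
  "weighted_dist u P \<rho> = enn_sqrt (ennreal (1 / \<rho> ^ 4) *
      (\<integral>\<^sup>+ z \<in> S_cyl \<rho>. ennreal ((u z - P z)\<^sup>2) \<partial>gamma_bar))"

definition N_sing :: "((real ^ 'n) \<times> real \<Rightarrow> real) \<Rightarrow> real \<Rightarrow> ennreal" where
  "N_sing u \<rho> = (INF P\<in>P_sing. weighted_dist u P \<rho>)"

definition M_sing :: "((real ^ 'n) \<times> real \<Rightarrow> real) \<Rightarrow> real \<Rightarrow> ennreal" where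
  "M_sing u \<rho> = (SUP r\<in>{0<..\<rho>}. N_sing u r)"

end

theory Submission
  imports Defs
begin

definition wgt :: "(real ^ 'n) \<times> real \<Rightarrow> ennreal" where
  "wgt = (\<lambda>(x, t). if t < 0 then ennreal (heat_kernel x (- t) / (- t)) else 0)"

lemma borel_to_lebesgue: "f \<in> borel_measurable borel \<Longrightarrow> f \<in> borel_measurable (lebesgue :: 'a::euclidean_space measure)"
proof -
  assume "f \<in> borel_measurable borel"
  then have "f \<in> borel_measurable lborel" by simp
  then show "f \<in> borel_measurable (lebesgue :: 'a::euclidean_space measure)" by (rule measurable_completion)
qed

lemma wgt_borel: "(wgt :: _ \<Rightarrow> ennreal) \<in> borel_measurable (borel :: ((real^'n)\<times>real) measure)"
proof -
  define g where "g = (\<lambda>z::(real^'n)\<times>real. (4 * pi * (- snd z)) powr (- real CARD('n) / 2) * exp (- (norm (fst z))\<^sup>2 / (4 * (- snd z))) / (- snd z))"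
  have e: "(wgt :: (real^'n)\<times>real \<Rightarrow> ennreal) = (\<lambda>z. if z \<in> {z. snd z < 0} then ennreal (g z) else 0)"
    by (auto simp: wgt_def heat_kernel_def g_def fun_eq_iff split: prod.splits)
  have o: "open {z::(real^'n)\<times>real. snd z < 0}"
    by (intro open_Collect_less continuous_intros)
  have gc: "continuous_on {z. snd z < 0} g"
    unfolding g_def by (intro continuous_intros) auto
  have gc2: "continuous_on {z. snd z < 0} (\<lambda>z. ennreal (g z))"
    by (rule continuous_on_ennreal[OF gc])
  show ?thesis unfolding e
    apply (rule borel_measurable_continuous_on_if)
    using o gc2 by (auto simp add: borel_open)
qed

lemma wgt_meas[measurable]: "(wgt :: _ \<Rightarrow> ennreal) \<in> borel_measurable (lebesgue :: ((real^'n)\<times>real) measure)"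
  by (rule borel_to_lebesgue[OF wgt_borel])

lemma gamma_bar_alt: "gamma_bar = density lebesgue wgt"
  unfolding gamma_bar_def wgt_def ..

lemma quad_borel:
  fixes Q :: "real^'n^'n"
  shows "(\<lambda>z::(real^'n)\<times>real. (1/2) * (fst z \<bullet> (Q *v fst z)) + m * snd z) \<in> borel_measurable borel"
  apply (rule borel_measurable_continuous_onI)
  apply (intro continuous_intros continuous_on_compose2[of UNIV "(*v) Q"] matrix_vector_mult_linear_continuous_on)
  apply auto
  done

definition Tsc :: "real \<Rightarrow> (real^'n)\<times>real \<Rightarrow> (real^'n)\<times>real" where
  "Tsc r z = (r *\<^sub>R fst z, r\<^sup>2 * snd z)"

lemma Tsc_sum:
  fixes z :: "(real^'n)\<times>real"
  shows "0 + (\<Sum>j\<in>Basis. ((if snd j = 0 then r else r\<^sup>2) * (z \<bullet> j)) *\<^sub>R j) = Tsc r z"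
proof (rule euclidean_eqI)
  fix b :: "(real^'n)\<times>real" assume b: "b \<in> Basis"
  obtain x t where z: "z = (x, t)" by (cases z)
  have "(0 + (\<Sum>j\<in>Basis. ((if snd j = 0 then r else r\<^sup>2) * (z \<bullet> j)) *\<^sub>R j)) \<bullet> b
     = (if snd b = 0 then r else r\<^sup>2) * (z \<bullet> b)"
    using b by (simp add: inner_sum_left inner_Basis if_distrib[of "\<lambda>x. _ * x"] sum.delta cong: if_cong)
  also have "\<dots> = Tsc r z \<bullet> b"
    using b by (auto simp: Tsc_def Basis_prod_def z)
  finally show "(0 + (\<Sum>j\<in>Basis. ((if snd j = 0 then r else r\<^sup>2) * (z \<bullet> j)) *\<^sub>R j)) \<bullet> b = Tsc r z \<bullet> b" .
qed

lemma Tsc_prod: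
  fixes r :: real
  assumes "r > 0"
  shows "(\<Prod>j\<in>(Basis :: ((real^'n)\<times>real) set). \<bar>if snd j = 0 then r else r\<^sup>2\<bar>) = r ^ (CARD('n) + 2)"
proof -
  have ar: "\<bar>r\<bar> = r" using assms by (rule abs_of_pos)
  have d: "(\<lambda>u. (u, 0::real)) ` (Basis :: (real^'n) set) \<inter> (\<lambda>v. (0::real^'n, v)) ` (Basis :: real set) = {}"
    by auto
  have "(\<Prod>j\<in>(Basis :: ((real^'n)\<times>real) set). \<bar>if snd j = 0 then r else r\<^sup>2\<bar>)
     = (\<Prod>j\<in>(\<lambda>u. (u, 0::real)) ` (Basis :: (real^'n) set). \<bar>if snd j = 0 then r else r\<^sup>2\<bar>) *
       (\<Prod>j\<in>(\<lambda>v. (0::real^'n, v)) ` (Basis :: real set). \<bar>if snd j = 0 then r else r\<^sup>2\<bar>)"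
    unfolding Basis_prod_def by (subst prod.union_disjoint) (use d ar in \<open>auto simp: Basis_real_def\<close>)
  also have "\<dots> = r ^ CARD('n) * r\<^sup>2"
    using assms by (simp add: prod.reindex inj_on_def Basis_real_def)
  finally show ?thesis by (simp add: power_add power2_eq_square)
qed

lemma change_var:
  fixes f :: "(real^'n)\<times>real \<Rightarrow> ennreal"
  assumes r: "r > 0" and f[measurable]: "f \<in> borel_measurable lebesgue"
  shows "(\<integral>\<^sup>+z. f z \<partial>lebesgue) = ennreal (r ^ (CARD('n) + 2)) * (\<integral>\<^sup>+z. f (Tsc r z) \<partial>lebesgue)"
proof -
  define c :: "(real^'n)\<times>real \<Rightarrow> real" where "c j = (if snd j = 0 then r else r\<^sup>2)" for j
  have c: "\<And>j. j \<in> Basis \<Longrightarrow> c j \<noteq> 0" using r by (auto simp: c_def)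
  define Tl where "Tl = (\<lambda>x::(real^'n)\<times>real. 0 + (\<Sum>j\<in>Basis. (c j * (x \<bullet> j)) *\<^sub>R j))"
  have Teq: "Tl = Tsc r"
    using Tsc_sum unfolding c_def Tl_def by (auto simp: fun_eq_iff simp del: add_0)
  have P: "(\<Prod>j\<in>Basis. \<bar>c j\<bar>) = r ^ (CARD('n) + 2)"
    unfolding c_def by (rule Tsc_prod[OF r])
  have X: "lebesgue = density (distr lebesgue lebesgue Tl) (\<lambda>_. (\<Prod>j\<in>Basis. \<bar>c j\<bar>))"
    unfolding Tl_def by (rule lebesgue_affine_euclidean(1)) (rule c)
  have Tm: "Tl \<in> lebesgue \<rightarrow>\<^sub>M lebesgue"
    unfolding Tl_def by (rule lebesgue_affine_measurable) (rule c)
  have "(\<integral>\<^sup>+z. f z \<partial>lebesgue) = integral\<^sup>N (density (distr lebesgue lebesgue Tl) (\<lambda>_. (\<Prod>j\<in>Basis. \<bar>c j\<bar>))) f"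
    using arg_cong[of _ _ "\<lambda>M. integral\<^sup>N M f", OF X] .
  also have "\<dots> = (\<integral>\<^sup>+z. ennreal (\<Prod>j\<in>Basis. \<bar>c j\<bar>) * f z \<partial>distr lebesgue lebesgue Tl)"
    by (rule nn_integral_density) (simp_all add: measurable_distr_eq1)
  also have "\<dots> = ennreal (\<Prod>j\<in>Basis. \<bar>c j\<bar>) * (\<integral>\<^sup>+z. f z \<partial>distr lebesgue lebesgue Tl)"
    by (rule nn_integral_cmult) (simp add: measurable_distr_eq1)
  also have "(\<integral>\<^sup>+z. f z \<partial>distr lebesgue lebesgue Tl) = (\<integral>\<^sup>+z. f (Tl z) \<partial>lebesgue)"
    by (rule nn_integral_distr[OF Tm]) (simp add: measurable_distr_eq1)
  finally show ?thesis unfolding Teq P .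
qed

lemma S_cyl_borel: "S_cyl r \<in> sets (borel :: ((real^'n)\<times>real) measure)"
proof -
  have "S_cyl r = {z::(real^'n)\<times>real. - (r\<^sup>2) < snd z} \<inter> {z. snd z \<le> 0}"
    by (auto simp: S_cyl_def)
  moreover have "open {z::(real^'n)\<times>real. - (r\<^sup>2) < snd z}"
    by (intro open_Collect_less continuous_intros)
  moreover have "closed {z::(real^'n)\<times>real. snd z \<le> 0}"
    by (intro closed_Collect_le continuous_intros)
  ultimately show ?thesis by (metis borel_open borel_closed sets.Int)
qed

lemma S_cyl_leb[measurable]: "S_cyl r \<in> sets (lebesgue :: ((real^'n)\<times>real) measure)"
  using S_cyl_borel[of r] by (metis sets_completionI_sets sets_lborel)

lemma heat_kernel_nonneg: "heat_kernel x s \<ge> 0"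
  unfolding heat_kernel_def by simp

lemma hk_scale:
  fixes x :: "real^'n"
  assumes r: "r > 0" and s: "s > 0"
  shows "heat_kernel (r *\<^sub>R x) (r\<^sup>2 * s) / (r\<^sup>2 * s) = (1 / r ^ (CARD('n) + 2)) * (heat_kernel x s / s)"
proof -
  have rs: "r\<^sup>2 * s > 0" using r s by simp
  have p: "(4 * pi * (r\<^sup>2 * s)) powr (- real CARD('n) / 2) = (r\<^sup>2) powr (- real CARD('n) / 2) * (4 * pi * s) powr (- real CARD('n) / 2)"
    using r s by (simp add: powr_mult[symmetric] mult_ac)
  have q: "(r\<^sup>2) powr (- real CARD('n) / 2) = 1 / r ^ CARD('n)"
  proof -
    have "(r\<^sup>2) powr (- real CARD('n) / 2) = (r powr 2) powr (- real CARD('n) / 2)"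
      using r by (simp add: powr_realpow)
    also have "\<dots> = r powr (- real CARD('n))" by (simp add: powr_powr)
    also have "\<dots> = 1 / r ^ CARD('n)" using r by (simp add: powr_minus powr_realpow divide_inverse)
    finally show ?thesis .
  qed
  have e: "- (norm (r *\<^sub>R x))\<^sup>2 / (4 * (r\<^sup>2 * s)) = - (norm x)\<^sup>2 / (4 * s)"
    using r s by (simp add: power_mult_distrib field_simps)
  have h1: "heat_kernel (r *\<^sub>R x) (r\<^sup>2 * s) = (1 / r ^ CARD('n)) * heat_kernel x s"
    unfolding heat_kernel_def if_P[OF rs] if_P[OF s] p q e by simp
  show ?thesis
    using r s unfolding h1 by (simp add: power_add divide_simps power2_eq_square)
qed

lemma wgt_scale:
  assumes r: "r > 0"
  shows "wgt (Tsc r z) = ennreal (1 / r ^ (CARD('n) + 2)) * wgt (z :: (real^'n)\<times>real)"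
proof -
  obtain x t where z: "z = (x, t)" by (cases z)
  show ?thesis
  proof (cases "t < 0")
    case True
    have neg: "r\<^sup>2 * t < 0" using True r by (simp add: mult_pos_neg)
    have "wgt (Tsc r z) = ennreal (heat_kernel (r *\<^sub>R x) (r\<^sup>2 * (- t)) / (r\<^sup>2 * (- t)))"
      using neg by (simp add: z wgt_def Tsc_def)
    also have "\<dots> = ennreal ((1 / r ^ (CARD('n) + 2)) * (heat_kernel x (-t) / (-t)))"
      using hk_scale[OF r, of "-t" x] True by simp
    also have "\<dots> = ennreal (1 / r ^ (CARD('n) + 2)) * ennreal (heat_kernel x (-t) / (-t))"
      using r True heat_kernel_nonneg[of x "-t"] by (intro ennreal_mult) (auto simp: divide_nonneg_neg)
    also have "ennreal (heat_kernel x (-t) / (-t)) = wgt z"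
      using True by (simp add: z wgt_def)
    finally show ?thesis .
  next
    case False
    then have "\<not> r\<^sup>2 * t < 0" using r by (simp add: mult_less_0_iff)
    then show ?thesis using False by (simp add: z wgt_def Tsc_def)
  qed
qed

lemma S_cyl_scale:
  assumes r: "r > 0"
  shows "indicator (S_cyl r) (Tsc r z) = (indicator (S_cyl 1) z :: ennreal)"
proof -
  obtain x t where z: "z = (x, t)" by (cases z)
  have "(- (r\<^sup>2) < r\<^sup>2 * t \<and> r\<^sup>2 * t \<le> 0) \<longleftrightarrow> (- 1 < t \<and> t \<le> 0)"
  proof -
    have r2: "r\<^sup>2 > 0" using r by simp
    have "- (r\<^sup>2) < r\<^sup>2 * t \<longleftrightarrow> r\<^sup>2 * (-1) < r\<^sup>2 * t" by simp
    also have "\<dots> \<longleftrightarrow> -1 < t" using r2 by (rule mult_less_cancel_left_pos)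
    finally have a: "- (r\<^sup>2) < r\<^sup>2 * t \<longleftrightarrow> -1 < t" .
    have b: "r\<^sup>2 * t \<le> 0 \<longleftrightarrow> t \<le> 0" using r2 by (simp add: mult_le_0_iff)
    show ?thesis using a b by simp
  qed
  then show ?thesis by (simp add: indicator_def S_cyl_def Tsc_def z)
qed

lemma scale_int:
  fixes f :: "(real^'n)\<times>real \<Rightarrow> real"
  assumes r: "r > 0" and fm[measurable]: "f \<in> borel_measurable lebesgue"
    and hom: "\<And>z. f (Tsc r z) = r\<^sup>2 * f z"
  shows "(\<integral>\<^sup>+ z\<in>S_cyl r. ennreal ((f z)\<^sup>2) \<partial>gamma_bar) = ennreal (r ^ 4) * (\<integral>\<^sup>+ z\<in>S_cyl 1. ennreal ((f z)\<^sup>2) \<partial>gamma_bar)"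
proof -
  define F where "F \<rho> z = wgt z * (ennreal ((f z)\<^sup>2) * indicator (S_cyl \<rho>) z)" for \<rho> z
  have Fm: "\<And>\<rho>. F \<rho> \<in> borel_measurable lebesgue" unfolding F_def by measurable
  have I: "\<And>\<rho>. (\<integral>\<^sup>+ z\<in>S_cyl \<rho>. ennreal ((f z)\<^sup>2) \<partial>gamma_bar) = (\<integral>\<^sup>+ z. F \<rho> z \<partial>lebesgue)"
    unfolding gamma_bar_alt F_def by (rule nn_integral_density) measurable
  have pw: "F r (Tsc r z) = ennreal (r ^ 4 / r ^ (CARD('n) + 2)) * F 1 z" for z
  proof -
    have a: "ennreal ((f (Tsc r z))\<^sup>2) = ennreal (r ^ 4) * ennreal ((f z)\<^sup>2)"
      unfolding hom by (simp add: power_mult_distrib ennreal_mult[symmetric])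
    have b: "ennreal (r ^ 4 / r ^ (CARD('n) + 2)) = ennreal (1 / r ^ (CARD('n) + 2)) * ennreal (r ^ 4)"
      using r by (simp add: ennreal_mult[symmetric])
    show ?thesis unfolding F_def wgt_scale[OF r] S_cyl_scale[OF r] a b by (simp add: mult_ac)
  qed
  have "(\<integral>\<^sup>+ z. F r z \<partial>lebesgue) = ennreal (r ^ (CARD('n) + 2)) * (\<integral>\<^sup>+ z. F r (Tsc r z) \<partial>lebesgue)"
    by (rule change_var[OF r Fm])
  also have "(\<integral>\<^sup>+ z. F r (Tsc r z) \<partial>lebesgue) = ennreal (r ^ 4 / r ^ (CARD('n) + 2)) * (\<integral>\<^sup>+ z. F 1 z \<partial>lebesgue)"
    unfolding pw by (rule nn_integral_cmult[OF Fm])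
  also have "ennreal (r ^ (CARD('n) + 2)) * (ennreal (r ^ 4 / r ^ (CARD('n) + 2)) * (\<integral>\<^sup>+ z. F 1 z \<partial>lebesgue)) = ennreal (r ^ 4) * (\<integral>\<^sup>+ z. F 1 z \<partial>lebesgue)"
  proof -
    have "ennreal (r ^ (CARD('n) + 2)) * ennreal (r ^ 4 / r ^ (CARD('n) + 2)) = ennreal (r ^ 4)"
      using r by (simp add: ennreal_mult[symmetric])
    then show ?thesis by (simp add: mult.assoc[symmetric])
  qed
  finally show ?thesis unfolding I .
qed

definition wd :: "((real ^ 'n) \<times> real \<Rightarrow> real) \<Rightarrow> real \<Rightarrow> ennreal" where
  "wd f \<rho> = enn_sqrt (ennreal (1 / \<rho> ^ 4) * (\<integral>\<^sup>+ z \<in> S_cyl \<rho>. ennreal ((f z)\<^sup>2) \<partial>gamma_bar))"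

lemma weighted_dist_wd: "weighted_dist u P \<rho> = wd (\<lambda>z. u z - P z) \<rho>"
  unfolding weighted_dist_def wd_def ..

lemma enn_sqrt_top[simp]: "enn_sqrt top = top" by (simp add: enn_sqrt_def)

lemma enn_sqrt_zero[simp]: "enn_sqrt 0 = 0" by (simp add: enn_sqrt_def)

lemma enn_sqrt_ennreal: "x \<ge> 0 \<Longrightarrow> enn_sqrt (ennreal x) = ennreal (sqrt x)"
  by (simp add: enn_sqrt_def)

lemma enn_sqrt_mono: "a \<le> b \<Longrightarrow> enn_sqrt a \<le> enn_sqrt b"
proof (cases "b = top")
  case True then show ?thesis by simp
next
  case False
  assume ab: "a \<le> b"
  then have "a \<noteq> top" using False top_unique by auto
  moreover have "enn2real a \<le> enn2real b" using ab False by (intro enn2real_mono) (auto simp: top.not_eq_extremum)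
  ultimately show ?thesis using False by (simp add: enn_sqrt_def)
qed

lemma enn_sqrt_cmult:
  assumes c: "c \<ge> 0"
  shows "enn_sqrt (ennreal (c\<^sup>2) * X) = ennreal c * enn_sqrt X"
proof (cases X)
  case (real x)
  then have "ennreal (c\<^sup>2) * X = ennreal (c\<^sup>2 * x)" using c by (simp add: ennreal_mult)
  moreover have "enn_sqrt (ennreal (c\<^sup>2 * x)) = ennreal (c * sqrt x)"
    using real c by (simp add: enn_sqrt_ennreal real_sqrt_mult)
  moreover have "ennreal (c * sqrt x) = ennreal c * enn_sqrt X"
    using real c by (simp add: enn_sqrt_ennreal ennreal_mult)
  ultimately show ?thesis by simp
next
  case top
  then show ?thesis using c by (cases "c = 0") (auto simp: ennreal_mult_top)
qed

lemma meas_gamma: "f \<in> borel_measurable lebesgue \<Longrightarrow> f \<in> borel_measurable (gamma_bar :: ((real^'n)\<times>real) measure)"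
  unfolding gamma_bar_alt by (subst measurable_cong_sets[OF sets_density refl]) auto

lemma Psing_form:
  assumes "P \<in> P_sing"
  obtains Q :: "real^'n^'n" and m where "P = (\<lambda>(x, t). (1/2) * (x \<bullet> (Q *v x)) + m * t)"
  using assms unfolding P_sing_def by blast

lemma Psing_meas:
  assumes "(P :: (real^'n)\<times>real \<Rightarrow> real) \<in> P_sing"
  shows "P \<in> borel_measurable lebesgue"
proof -
  obtain Q :: "real^'n^'n" and m where P: "P = (\<lambda>(x, t). (1/2) * (x \<bullet> (Q *v x)) + m * t)"
    using Psing_form[OF assms] by blast
  have "P = (\<lambda>z. (1/2) * (fst z \<bullet> (Q *v fst z)) + m * snd z)"
    unfolding P by (auto simp: fun_eq_iff)
  then show ?thesis using borel_to_lebesgue[OF quad_borel] by simp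
qed

lemma Psing_hom:
  assumes "(P :: (real^'n)\<times>real \<Rightarrow> real) \<in> P_sing"
  shows "P (Tsc r z) = r\<^sup>2 * P z"
proof -
  obtain Q :: "real^'n^'n" and m where P: "P = (\<lambda>(x, t). (1/2) * (x \<bullet> (Q *v x)) + m * t)"
    using Psing_form[OF assms] by blast
  obtain x t where z: "z = (x, t)" by (cases z)
  show ?thesis unfolding P z Tsc_def
    by (simp add: matrix_vector_mult_scaleR power2_eq_square algebra_simps)
qed

lemma wd_hom:
  assumes P: "P \<in> P_sing" and P': "P' \<in> P_sing" and r: "r > 0"
  shows "wd (\<lambda>z. P z - P' z) r = wd (\<lambda>z. P z - P' z) 1"
proof -
  have "(\<integral>\<^sup>+ z\<in>S_cyl r. ennreal ((P z - P' z)\<^sup>2) \<partial>gamma_bar) = ennreal (r ^ 4) * (\<integral>\<^sup>+ z\<in>S_cyl 1. ennreal ((P z - P' z)\<^sup>2) \<partial>gamma_bar)"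
    by (rule scale_int[OF r]) (use Psing_meas[OF P] Psing_meas[OF P'] Psing_hom[OF P] Psing_hom[OF P'] in \<open>auto simp: algebra_simps\<close>)
  moreover have "ennreal (1 / r ^ 4) * ennreal (r ^ 4) = 1"
    using r by (simp add: ennreal_mult[symmetric])
  ultimately show ?thesis unfolding wd_def by (simp add: mult.assoc[symmetric])
qed

lemma real_key:
  fixes a b d :: real
  assumes a: "a \<ge> 0" and b: "b \<ge> 0" and d: "d > 0"
  shows "(1 + (b + d) / (a + d)) * a\<^sup>2 + (1 + 1 / ((b + d) / (a + d))) * b\<^sup>2 \<le> (a + b)\<^sup>2 + d * (a + b)"
proof -
  have ad: "a + d > 0" and bd: "b + d > 0" using a b d by auto
  have 1: "a\<^sup>2 * ((b + d) / (a + d)) \<le> a * (b + d)"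
  proof -
    have "a\<^sup>2 * (b + d) \<le> a * (b + d) * (a + d)"
      using a b d by (simp add: power2_eq_square mult_left_mono algebra_simps mult_nonneg_nonneg)
    then show ?thesis using ad by (simp add: divide_simps mult_ac)
  qed
  have 2: "b\<^sup>2 * ((a + d) / (b + d)) \<le> b * (a + d)"
  proof -
    have "b\<^sup>2 * (a + d) \<le> b * (a + d) * (b + d)"
      using a b d by (simp add: power2_eq_square mult_left_mono algebra_simps mult_nonneg_nonneg)
    then show ?thesis using bd by (simp add: divide_simps mult_ac)
  qed
  have "(1 + (b + d) / (a + d)) * a\<^sup>2 + (1 + 1 / ((b + d) / (a + d))) * b\<^sup>2
      = a\<^sup>2 + b\<^sup>2 + a\<^sup>2 * ((b + d) / (a + d)) + b\<^sup>2 * ((a + d) / (b + d))"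
    by (simp add: algebra_simps)
  also have "\<dots> \<le> a\<^sup>2 + b\<^sup>2 + a * (b + d) + b * (a + d)" using 1 2 by linarith
  also have "\<dots> = (a + b)\<^sup>2 + d * (a + b)" by (simp add: power2_eq_square algebra_simps)
  finally show ?thesis .
qed

lemma pw_ineq:
  fixes x y l :: real
  assumes l: "l > 0"
  shows "(x + y)\<^sup>2 \<le> (1 + l) * x\<^sup>2 + (1 + 1 / l) * y\<^sup>2"
proof -
  have "0 \<le> (l * x - y)\<^sup>2 / l" using l by simp
  also have "(l * x - y)\<^sup>2 / l = l * x\<^sup>2 - 2 * x * y + y\<^sup>2 / l"
    using l by (simp add: power2_eq_square field_simps)
  finally have "2 * x * y \<le> l * x\<^sup>2 + y\<^sup>2 / l" by simp
  then show ?thesis by (simp add: power2_eq_square algebra_simps)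
qed

lemma minkowski:
  assumes fm[measurable]: "f \<in> borel_measurable M" and gm[measurable]: "g \<in> borel_measurable M"
  shows "enn_sqrt (\<integral>\<^sup>+ z. ennreal ((f z + g z)\<^sup>2) \<partial>M)
     \<le> enn_sqrt (\<integral>\<^sup>+ z. ennreal ((f z)\<^sup>2) \<partial>M) + enn_sqrt (\<integral>\<^sup>+ z. ennreal ((g z)\<^sup>2) \<partial>M)"
proof -
  define A where "A = (\<integral>\<^sup>+ z. ennreal ((f z)\<^sup>2) \<partial>M)"
  define B where "B = (\<integral>\<^sup>+ z. ennreal ((g z)\<^sup>2) \<partial>M)"
  show ?thesis
  proof (cases "A = top \<or> B = top")
    case True then show ?thesis unfolding A_def[symmetric] B_def[symmetric] by auto
  next
    case False
    then obtain x y where x: "A = ennreal x" "x \<ge> 0" and y: "B = ennreal y" "y \<ge> 0"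
      by (metis ennreal_cases)
    define a where "a = sqrt x"
    define b where "b = sqrt y"
    have a: "a \<ge> 0" "x = a\<^sup>2" and b: "b \<ge> 0" "y = b\<^sup>2" using x y by (auto simp: a_def b_def)
    have step: "(\<integral>\<^sup>+ z. ennreal ((f z + g z)\<^sup>2) \<partial>M) \<le> ennreal ((1 + l) * a\<^sup>2 + (1 + 1 / l) * b\<^sup>2)" if l: "l > 0" for l
    proof -
      have "(\<integral>\<^sup>+ z. ennreal ((f z + g z)\<^sup>2) \<partial>M) \<le> (\<integral>\<^sup>+ z. ennreal (1 + l) * ennreal ((f z)\<^sup>2) + ennreal (1 + 1 / l) * ennreal ((g z)\<^sup>2) \<partial>M)"
      proof (rule nn_integral_mono)
        fix z
        have "ennreal ((f z + g z)\<^sup>2) \<le> ennreal ((1 + l) * (f z)\<^sup>2 + (1 + 1 / l) * (g z)\<^sup>2)"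
          using pw_ineq[OF l] by (rule ennreal_leI)
        also have "\<dots> = ennreal (1 + l) * ennreal ((f z)\<^sup>2) + ennreal (1 + 1 / l) * ennreal ((g z)\<^sup>2)"
          using l by (simp add: ennreal_plus ennreal_mult'')
        finally show "ennreal ((f z + g z)\<^sup>2) \<le> ennreal (1 + l) * ennreal ((f z)\<^sup>2) + ennreal (1 + 1 / l) * ennreal ((g z)\<^sup>2)" .
      qed
      also have "\<dots> = ennreal (1 + l) * A + ennreal (1 + 1 / l) * B"
        unfolding A_def B_def by (simp add: nn_integral_add nn_integral_cmult)
      also have "\<dots> = ennreal ((1 + l) * a\<^sup>2 + (1 + 1 / l) * b\<^sup>2)"
        using l unfolding x(1) y(1) a(2) b(2) by (simp add: ennreal_plus ennreal_mult'')
      finally show ?thesis .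
    qed
    have main: "(\<integral>\<^sup>+ z. ennreal ((f z + g z)\<^sup>2) \<partial>M) \<le> ennreal ((a + b)\<^sup>2)"
    proof (rule ennreal_le_epsilon)
      fix e :: real assume e: "0 < e"
      define d where "d = e / (a + b + 1)"
      have d: "d > 0" using e a b by (simp add: d_def)
      have de: "d * (a + b) \<le> e"
      proof -
        have "d * (a + b) \<le> d * (a + b + 1)" using d by simp
        also have "\<dots> = e" using a b by (simp add: d_def)
        finally show ?thesis .
      qed
      have l: "(b + d) / (a + d) > 0" using a b d by simp
      have "(\<integral>\<^sup>+ z. ennreal ((f z + g z)\<^sup>2) \<partial>M) \<le> ennreal ((1 + (b + d) / (a + d)) * a\<^sup>2 + (1 + 1 / ((b + d) / (a + d))) * b\<^sup>2)"
        by (rule step[OF l])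
      also have "\<dots> \<le> ennreal ((a + b)\<^sup>2 + e)"
        using real_key[OF a(1) b(1) d] de by (intro ennreal_leI) linarith
      also have "\<dots> = ennreal ((a + b)\<^sup>2) + ennreal e"
        using e by (simp add: ennreal_plus)
      finally show "(\<integral>\<^sup>+ z. ennreal ((f z + g z)\<^sup>2) \<partial>M) \<le> ennreal ((a + b)\<^sup>2) + ennreal e" .
    qed
    have "enn_sqrt (\<integral>\<^sup>+ z. ennreal ((f z + g z)\<^sup>2) \<partial>M) \<le> enn_sqrt (ennreal ((a + b)\<^sup>2))"
      by (rule enn_sqrt_mono[OF main])
    also have "\<dots> = ennreal a + ennreal b"
      using a(1) b(1) by (simp add: enn_sqrt_ennreal ennreal_plus)
    also have "ennreal a = enn_sqrt A" unfolding x(1) a_def using x(2) by (simp add: enn_sqrt_ennreal)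
    also have "ennreal b = enn_sqrt B" unfolding y(1) b_def using y(2) by (simp add: enn_sqrt_ennreal)
    finally show ?thesis unfolding A_def B_def .
  qed
qed

lemma wd_as_int:
  fixes h :: "(real^'n)\<times>real \<Rightarrow> real"
  assumes hm: "h \<in> borel_measurable lebesgue"
  shows "wd h \<rho> = enn_sqrt (\<integral>\<^sup>+ z. ennreal ((1 / \<rho>\<^sup>2 * indicator (S_cyl \<rho>) z * h z)\<^sup>2) \<partial>gamma_bar)"
proof -
  have m: "(\<lambda>z. ennreal ((h z)\<^sup>2) * indicator (S_cyl \<rho>) z) \<in> borel_measurable (gamma_bar :: ((real^'n)\<times>real) measure)"
    using hm borel_measurable_indicator[OF S_cyl_leb[of \<rho>]] by (intro meas_gamma) measurable
  have "ennreal (1 / \<rho> ^ 4) * (\<integral>\<^sup>+ z\<in>S_cyl \<rho>. ennreal ((h z)\<^sup>2) \<partial>gamma_bar)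
      = (\<integral>\<^sup>+ z. ennreal (1 / \<rho> ^ 4) * (ennreal ((h z)\<^sup>2) * indicator (S_cyl \<rho>) z) \<partial>gamma_bar)"
    by (rule nn_integral_cmult[OF m, symmetric])
  also have "\<dots> = (\<integral>\<^sup>+ z. ennreal ((1 / \<rho>\<^sup>2 * indicator (S_cyl \<rho>) z * h z)\<^sup>2) \<partial>gamma_bar)"
  proof (intro nn_integral_cong)
    fix z
    have k: "(1 / \<rho>\<^sup>2 * y)\<^sup>2 = 1 / \<rho> ^ 4 * y\<^sup>2" for y :: real
      by (simp add: power_mult_distrib power_divide power_mult[symmetric])
    have k': "(y / \<rho>\<^sup>2)\<^sup>2 = 1 / \<rho> ^ 4 * y\<^sup>2" for y :: real
      by (simp add: power_divide power_mult[symmetric])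
    show "ennreal (1 / \<rho> ^ 4) * (ennreal ((h z)\<^sup>2) * indicator (S_cyl \<rho>) z) = ennreal ((1 / \<rho>\<^sup>2 * indicator (S_cyl \<rho>) z * h z)\<^sup>2)"
    proof (cases "z \<in> S_cyl \<rho>")
      case True
      have e: "(1 / \<rho>\<^sup>2 * indicator (S_cyl \<rho>) z * h z)\<^sup>2 = 1 / \<rho> ^ 4 * (h z)\<^sup>2"
        using True by (simp add: power_mult_distrib power_divide power_mult[symmetric])
      show ?thesis unfolding e by (subst ennreal_mult'') (simp_all add: True)
    qed simp
  qed
  finally show ?thesis unfolding wd_def by simp
qed

lemma wd_triangle:
  fixes f g :: "(real^'n)\<times>real \<Rightarrow> real"
  assumes fm[measurable]: "f \<in> borel_measurable lebesgue" and gm[measurable]: "g \<in> borel_measurable lebesgue"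
  shows "wd (\<lambda>z. f z + g z) \<rho> \<le> wd f \<rho> + wd g \<rho>"
proof -
  have fgm: "(\<lambda>z. f z + g z) \<in> borel_measurable lebesgue" by measurable
  have "wd (\<lambda>z. f z + g z) \<rho> = enn_sqrt (\<integral>\<^sup>+ z. ennreal ((1 / \<rho>\<^sup>2 * indicator (S_cyl \<rho>) z * f z + 1 / \<rho>\<^sup>2 * indicator (S_cyl \<rho>) z * g z)\<^sup>2) \<partial>gamma_bar)"
    by (simp only: wd_as_int[OF fgm] distrib_left)
  also have "\<dots> \<le> wd f \<rho> + wd g \<rho>"
    unfolding wd_as_int[OF fm] wd_as_int[OF gm]
    by (rule minkowski) (use borel_measurable_indicator[OF S_cyl_leb[of \<rho>]] in \<open>(intro meas_gamma; measurable)+\<close>)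
  finally show ?thesis .
qed

lemma wd_mono:
  fixes f :: "(real^'n)\<times>real \<Rightarrow> real"
  assumes r: "0 < r" "r \<le> R" "R \<le> 2 * r"
  shows "wd f r \<le> 4 * wd f R"
proof -
  have sub: "(\<integral>\<^sup>+ z\<in>S_cyl r. ennreal ((f z)\<^sup>2) \<partial>gamma_bar) \<le> (\<integral>\<^sup>+ z\<in>S_cyl R. ennreal ((f z)\<^sup>2) \<partial>gamma_bar)"
  proof (rule nn_integral_mono)
    fix z
    have "r\<^sup>2 \<le> R\<^sup>2" using r by (intro power_mono) auto
    then have "S_cyl r \<subseteq> S_cyl R" by (auto simp: S_cyl_def)
    then show "ennreal ((f z)\<^sup>2) * indicator (S_cyl r) z \<le> ennreal ((f z)\<^sup>2) * indicator (S_cyl R) z"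
      by (auto simp: indicator_def)
  qed
  have c: "1 / r ^ 4 \<le> 4\<^sup>2 * (1 / R ^ 4)"
  proof -
    have "R ^ 4 \<le> (2 * r) ^ 4" using r by (intro power_mono) auto
    then have "R ^ 4 \<le> 4\<^sup>2 * r ^ 4" by simp
    then show ?thesis using r by (simp add: divide_simps)
  qed
  have "ennreal (1 / r ^ 4) * (\<integral>\<^sup>+ z\<in>S_cyl r. ennreal ((f z)\<^sup>2) \<partial>gamma_bar)
     \<le> ennreal (4\<^sup>2) * (ennreal (1 / R ^ 4) * (\<integral>\<^sup>+ z\<in>S_cyl R. ennreal ((f z)\<^sup>2) \<partial>gamma_bar))"
  proof -
    have "ennreal (1 / r ^ 4) \<le> ennreal (4\<^sup>2 * (1 / R ^ 4))" using c by (rule ennreal_leI)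
    also have "\<dots> = ennreal (4\<^sup>2) * ennreal (1 / R ^ 4)" by (rule ennreal_mult) auto
    finally have c2: "ennreal (1 / r ^ 4) \<le> ennreal (4\<^sup>2) * ennreal (1 / R ^ 4)" .
    show ?thesis unfolding mult.assoc[symmetric] by (intro mult_mono c2 sub) auto
  qed
  then have "wd f r \<le> enn_sqrt (ennreal (4\<^sup>2) * (ennreal (1 / R ^ 4) * (\<integral>\<^sup>+ z\<in>S_cyl R. ennreal ((f z)\<^sup>2) \<partial>gamma_bar)))"
    unfolding wd_def by (rule enn_sqrt_mono)
  also have "\<dots> = 4 * wd f R" unfolding wd_def by (subst enn_sqrt_cmult) simp_all
  finally show ?thesis .
qed

lemma wd_swap: "wd (\<lambda>z. a z - b z) \<rho> = wd (\<lambda>z. b z - a z) \<rho>"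
  unfolding wd_def by (simp add: power2_commute)

lemma telescope:
  fixes u :: "(real^'n)\<times>real \<Rightarrow> real" and P :: "nat \<Rightarrow> (real^'n)\<times>real \<Rightarrow> real"
  assumes um: "u \<in> borel_measurable lebesgue"
    and Pm: "\<And>j. j \<le> K \<Longrightarrow> P j \<in> borel_measurable lebesgue"
  shows "k \<le> K \<Longrightarrow> wd (\<lambda>z. u z - P 0 z) R \<le> wd (\<lambda>z. u z - P k z) R + (\<Sum>j<k. wd (\<lambda>z. P (Suc j) z - P j z) R)"
proof (induction k)
  case 0 then show ?case by simp
next
  case (Suc k)
  have m1: "(\<lambda>z. u z - P (Suc k) z) \<in> borel_measurable lebesgue"
    using um Pm[OF Suc.prems] by measurable
  have pk: "P k \<in> borel_measurable lebesgue" by (rule Pm) (use Suc.prems in simp)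
  have m2: "(\<lambda>z. P (Suc k) z - P k z) \<in> borel_measurable lebesgue"
    using Pm[OF Suc.prems] pk by measurable
  have e: "(\<lambda>z. (u z - P (Suc k) z) + (P (Suc k) z - P k z)) = (\<lambda>z. u z - P k z)" by auto
  have "wd (\<lambda>z. u z - P k z) R = wd (\<lambda>z. (u z - P (Suc k) z) + (P (Suc k) z - P k z)) R"
    unfolding e ..
  also have "\<dots> \<le> wd (\<lambda>z. u z - P (Suc k) z) R + wd (\<lambda>z. P (Suc k) z - P k z) R"
    by (rule wd_triangle[OF m1 m2])
  finally have "wd (\<lambda>z. u z - P k z) R \<le> wd (\<lambda>z. u z - P (Suc k) z) R + wd (\<lambda>z. P (Suc k) z - P k z) R" .
  then have st: "wd (\<lambda>z. u z - P k z) R + (\<Sum>j<k. wd (\<lambda>z. P (Suc j) z - P j z) R) \<le> wd (\<lambda>z. u z - P (Suc k) z) R + (\<Sum>j<Suc k. wd (\<lambda>z. P (Suc j) z - P j z) R)"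
    by (simp add: add.assoc add.commute add.left_commute add_right_mono)
  have ih: "wd (\<lambda>z. u z - P 0 z) R \<le> wd (\<lambda>z. u z - P k z) R + (\<Sum>j<k. wd (\<lambda>z. P (Suc j) z - P j z) R)"
    using Suc.IH Suc.prems by simp
  show ?case using order_trans[OF ih st] .
qed

lemma chain:
  fixes u :: "(real^'n)\<times>real \<Rightarrow> real" and P :: "nat \<Rightarrow> (real^'n)\<times>real \<Rightarrow> real"
  assumes um: "u \<in> borel_measurable lebesgue"
    and P: "\<And>j. j \<le> K \<Longrightarrow> P j \<in> P_sing"
    and rpos: "\<And>j. j \<le> K \<Longrightarrow> r j > 0"
    and ratio: "\<And>j. j < K \<Longrightarrow> r j \<le> 2 * r (Suc j) \<and> r (Suc j) \<le> 2 * r j"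
  shows "wd (\<lambda>z. u z - P 0 z) (r K) \<le> 9 * (\<Sum>j\<le>K. wd (\<lambda>z. u z - P j z) (r j))"
proof -
  define d where "d j = wd (\<lambda>z. u z - P j z) (r j)" for j
  have Pm: "\<And>j. j \<le> K \<Longrightarrow> P j \<in> borel_measurable lebesgue" using P Psing_meas by blast
  have diff: "wd (\<lambda>z. P (Suc j) z - P j z) (r K) \<le> 4 * d j + 4 * d (Suc j)" if j: "j < K" for j
  proof -
    define m where "m = min (r j) (r (Suc j))"
    have rj: "r j > 0" "r (Suc j) > 0" using rpos j by auto
    have m: "m > 0" "m \<le> r j" "r j \<le> 2 * m" "m \<le> r (Suc j)" "r (Suc j) \<le> 2 * m"
      using rj ratio[OF j] by (auto simp: m_def)
    have PS: "P (Suc j) \<in> P_sing" "P j \<in> P_sing" using P j by auto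
    have ee: "(\<lambda>z. (u z - P j z) + (P (Suc j) z - u z)) = (\<lambda>z. P (Suc j) z - P j z)" by auto
    have "wd (\<lambda>z. P (Suc j) z - P j z) (r K) = wd (\<lambda>z. P (Suc j) z - P j z) 1"
      by (rule wd_hom[OF PS]) (use rpos[of K] in simp)
    also have "\<dots> = wd (\<lambda>z. P (Suc j) z - P j z) m"
      by (rule wd_hom[OF PS m(1), symmetric])
    also have "\<dots> = wd (\<lambda>z. (u z - P j z) + (P (Suc j) z - u z)) m" unfolding ee ..
    also have "\<dots> \<le> wd (\<lambda>z. u z - P j z) m + wd (\<lambda>z. P (Suc j) z - u z) m"
    proof (rule wd_triangle)
      have p1: "P j \<in> borel_measurable lebesgue" by (rule Pm) (use j in simp)
      have p2: "P (Suc j) \<in> borel_measurable lebesgue" by (rule Pm) (use j in simp)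
      show "(\<lambda>z. u z - P j z) \<in> borel_measurable lebesgue" using um p1 by measurable
      show "(\<lambda>z. P (Suc j) z - u z) \<in> borel_measurable lebesgue" using um p2 by measurable
    qed
    also have "wd (\<lambda>z. P (Suc j) z - u z) m = wd (\<lambda>z. u z - P (Suc j) z) m"
      by (rule wd_swap)
    also have "wd (\<lambda>z. u z - P j z) m \<le> 4 * d j"
      unfolding d_def by (rule wd_mono) (use m in auto)
    also have "wd (\<lambda>z. u z - P (Suc j) z) m \<le> 4 * d (Suc j)"
      unfolding d_def by (rule wd_mono) (use m in auto)
    finally show ?thesis by (simp add: add_mono)
  qed
  have "wd (\<lambda>z. u z - P 0 z) (r K) \<le> d K + (\<Sum>j<K. wd (\<lambda>z. P (Suc j) z - P j z) (r K))"
    using telescope[where u=u and P=P and K=K and k=K and R="r K", OF um Pm] unfolding d_def by simp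
  also have "\<dots> \<le> d K + (\<Sum>j<K. 4 * d j + 4 * d (Suc j))"
    by (intro add_left_mono sum_mono diff) simp
  also have "\<dots> = d K + 4 * (\<Sum>j<K. d j) + 4 * (\<Sum>j<K. d (Suc j))"
    by (simp add: sum.distrib sum_distrib_left add.assoc)
  also have "\<dots> \<le> (\<Sum>j\<le>K. d j) + 4 * (\<Sum>j\<le>K. d j) + 4 * (\<Sum>j\<le>K. d j)"
  proof -
    have a: "d K \<le> (\<Sum>j\<le>K. d j)" by (rule member_le_sum) auto
    have b: "(\<Sum>j<K. d j) \<le> (\<Sum>j\<le>K. d j)" by (rule sum_mono2) auto
    have "(\<Sum>j<Suc K. d j) = d 0 + (\<Sum>j<K. d (Suc j))" by (rule sum.lessThan_Suc_shift)
    then have c: "(\<Sum>j<K. d (Suc j)) \<le> (\<Sum>j\<le>K. d j)" using lessThan_Suc_atMost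
      by (metis add.commute le_iff_add)
    show ?thesis by (intro add_mono mult_left_mono a b c) auto
  qed
  also have "\<dots> = 9 * (\<Sum>j\<le>K. d j)"
  proof -
    have "(9::ennreal) = 1 + 4 + 4" by simp
    then show ?thesis by (simp only: distrib_right mult_1)
  qed
  finally show ?thesis unfolding d_def .
qed

lemma step_sum_le:
  fixes G :: "real \<Rightarrow> ennreal" and b :: "nat \<Rightarrow> real" and J :: "nat set"
  assumes J: "finite J"
    and pos: "\<And>j. j \<in> J \<Longrightarrow> b j > 0"
    and disj: "\<And>i j. i \<in> J \<Longrightarrow> j \<in> J \<Longrightarrow> i < j \<Longrightarrow> 3/2 * b i < b j \<or> 3/2 * b j < b i"
    and sub: "\<And>j. j \<in> J \<Longrightarrow> A \<le> b j \<and> 3/2 * b j \<le> B"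
    and Gm: "\<And>j s. j \<in> J \<Longrightarrow> b j \<le> s \<Longrightarrow> G (b j) \<le> G s"
  shows "(\<Sum>j\<in>J. G (b j)) \<le> 3 * (\<integral>\<^sup>+ s\<in>{A..B}. G s * ennreal (1 / s) \<partial>lborel)"
proof -
  define I where "I j = {b j .. 3/2 * b j}" for j
  define c where "c j = G (b j) * ennreal (2 / (3 * b j))" for j
  define h where "h s = (\<Sum>j\<in>J. c j * indicator (I j) s)" for s
  have dI: "i \<in> J \<Longrightarrow> j \<in> J \<Longrightarrow> i \<noteq> j \<Longrightarrow> s \<in> I i \<Longrightarrow> s \<notin> I j" for i j s
  proof -
    assume ij: "i \<in> J" "j \<in> J" "i \<noteq> j" and s: "s \<in> I i"
    show "s \<notin> I j"
    proof (cases "i < j")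
      case True then show ?thesis using disj[of i j] ij s by (auto simp: I_def)
    next
      case False then have "j < i" using ij by simp
      then show ?thesis using disj[of j i] ij s by (auto simp: I_def)
    qed
  qed
  have ih: "(\<integral>\<^sup>+ s. h s \<partial>lborel) = (\<Sum>j\<in>J. c j * emeasure lborel (I j))"
    unfolding h_def
    by (subst nn_integral_sum) (auto simp: I_def nn_integral_cmult_indicator)
  also have "\<dots> = (\<Sum>j\<in>J. G (b j) * ennreal (1/3))"
  proof (rule sum.cong[OF refl])
    fix j assume j: "j \<in> J"
    have bj: "b j > 0" using pos j by simp
    have "emeasure lborel (I j) = ennreal (b j / 2)" using bj by (simp add: I_def)
    moreover have "ennreal (2 / (3 * b j)) * ennreal (b j / 2) = ennreal (1/3)"
      using bj by (simp add: ennreal_mult[symmetric])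
    ultimately show "c j * emeasure lborel (I j) = G (b j) * ennreal (1/3)"
      by (simp add: c_def mult.assoc)
  qed
  finally have ih2: "(\<integral>\<^sup>+ s. h s \<partial>lborel) = (\<Sum>j\<in>J. G (b j)) * ennreal (1/3)"
    by (simp add: sum_distrib_right)
  have hle: "(\<integral>\<^sup>+ s. h s \<partial>lborel) \<le> (\<integral>\<^sup>+ s\<in>{A..B}. G s * ennreal (1 / s) \<partial>lborel)"
  proof (rule nn_integral_mono)
    fix s
    show "h s \<le> G s * ennreal (1 / s) * indicator {A..B} s"
    proof (cases "\<exists>j\<in>J. s \<in> I j")
      case True
      then obtain j0 where j0: "j0 \<in> J" "s \<in> I j0" by blast
      have bj: "b j0 > 0" using pos j0 by simp
      have "h s = c j0 * indicator (I j0) s + (\<Sum>j\<in>J - {j0}. c j * indicator (I j) s)"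
        unfolding h_def by (rule sum.remove[OF J j0(1)])
      also have "(\<Sum>j\<in>J - {j0}. c j * indicator (I j) s) = 0"
        using dI[of j0 _ s] j0 by (intro sum.neutral) auto
      finally have hs: "h s = c j0" using j0 by simp
      have sAB: "s \<in> {A..B}" using sub[OF j0(1)] j0(2) by (auto simp: I_def)
      have le1: "G (b j0) \<le> G s" using Gm[OF j0(1)] j0(2) by (auto simp: I_def)
      have le2: "2 / (3 * b j0) \<le> 1 / s"
        using j0(2) bj by (auto simp: I_def divide_simps)
      have "c j0 \<le> G s * ennreal (1 / s)"
        unfolding c_def by (intro mult_mono le1 ennreal_leI le2) auto
      then show ?thesis using hs sAB by simp
    next
      case False
      then have "h s = 0" unfolding h_def by (intro sum.neutral) auto
      then show ?thesis by simp
    qed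
  qed
  have "(\<Sum>j\<in>J. G (b j)) = 3 * ((\<Sum>j\<in>J. G (b j)) * ennreal (1/3))"
  proof -
    have "(3::ennreal) * ennreal (1/3) = 1"
      by (simp add: ennreal_mult[symmetric] flip: ennreal_numeral)
    then show ?thesis by (metis mult.assoc mult.commute mult_1)
  qed
  also have "\<dots> \<le> 3 * (\<integral>\<^sup>+ s\<in>{A..B}. G s * ennreal (1 / s) \<partial>lborel)"
    unfolding ih2[symmetric] by (intro mult_left_mono hle) auto
  finally show ?thesis .
qed

lemma N_le_M: "0 < r \<Longrightarrow> r \<le> s \<Longrightarrow> N_sing u r \<le> M_sing u s"
  unfolding M_sing_def by (rule SUP_upper) auto

lemma M_mono: "s \<le> t \<Longrightarrow> M_sing u s \<le> M_sing u t"
  unfolding M_sing_def by (rule SUP_subset_mono) auto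

lemma pick:
  fixes u P1 :: "(real^'n)\<times>real \<Rightarrow> real"
  assumes P1: "P1 \<in> P_sing" and e: "\<epsilon> > 0"
  shows "\<exists>P\<in>P_sing. wd (\<lambda>z. u z - P z) r \<le> N_sing u r + ennreal \<epsilon>"
proof (cases "N_sing u r = top")
  case True show ?thesis by (rule bexI[OF _ P1]) (simp add: True)
next
  case False
  show ?thesis
  proof (rule ccontr)
    assume "\<not> ?thesis"
    then have "\<And>P. P \<in> P_sing \<Longrightarrow> N_sing u r + ennreal \<epsilon> \<le> wd (\<lambda>z. u z - P z) r" by auto
    then have "N_sing u r + ennreal \<epsilon> \<le> N_sing u r"
      unfolding N_sing_def weighted_dist_wd by (rule INF_greatest)
    moreover obtain n where n: "N_sing u r = ennreal n" "n \<ge> 0" using False by (cases "N_sing u r") auto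
    ultimately have "ennreal (n + \<epsilon>) \<le> ennreal n" using e by (simp add: ennreal_plus)
    then have "n + \<epsilon> \<le> n" using n by (simp add: ennreal_le_iff)
    then show False using e by simp
  qed
qed

lemma sum_eps:
  "(\<Sum>j\<le>K. (a j :: ennreal) + ennreal \<epsilon>) = (\<Sum>j\<le>K. a j) + ennreal ((real K + 1) * \<epsilon>)" if "\<epsilon> \<ge> 0"
proof -
  have "(\<Sum>j\<le>K. ennreal \<epsilon>) = of_nat (K + 1) * ennreal \<epsilon>" by simp
  also have "\<dots> = ennreal ((real K + 1) * \<epsilon>)"
  proof -
    have "(of_nat (K + 1) :: ennreal) = ennreal (real K + 1)"
      by (metis ennreal_of_nat_eq_real_of_nat of_nat_Suc Suc_eq_plus1 add.commute)
    then show ?thesis using that by (simp add: ennreal_mult add.commute)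
  qed
  finally show ?thesis by (simp add: sum.distrib)
qed

lemma up_case:
  fixes u P1 :: "(real^'n)\<times>real \<Rightarrow> real"
  assumes um: "u \<in> borel_measurable lebesgue" and P1: "P1 \<in> P_sing"
    and d0: "wd (\<lambda>z. u z - P1 z) 1 = N_sing u 1"
    and \<rho>: "\<rho> \<ge> 1"
  shows "wd (\<lambda>z. u z - P1 z) \<rho> \<le> 108 * (\<integral>\<^sup>+ s\<in>{1..2*\<rho>}. M_sing u s * ennreal (1 / s) \<partial>lborel)"
proof -
  have ex: "\<exists>k. \<rho> \<le> (2::real)^k" using real_arch_pow[of 2 \<rho>] by (auto intro: less_imp_le)
  define K where "K = (LEAST k. \<rho> \<le> (2::real)^k)"
  have K1: "\<rho> \<le> 2^K" unfolding K_def using ex by (rule LeastI_ex)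
  have K2: "2^(K-1) < \<rho>" if "K > 0"
  proof -
    have "\<not> \<rho> \<le> (2::real)^(K-1)"
      using not_less_Least[of "K - 1" "\<lambda>k. \<rho> \<le> (2::real)^k"] that unfolding K_def[symmetric] by simp
    then show ?thesis by simp
  qed
  define r where "r j = (if j < K then (2::real)^j else \<rho>)" for j
  have r0: "r 0 = 1"
  proof (cases "K = 0")
    case True then show ?thesis using K1 \<rho> by (simp add: r_def)
  next
    case False then show ?thesis by (simp add: r_def)
  qed
  have rK: "r K = \<rho>" by (simp add: r_def)
  have rpos: "\<And>j. r j > 0" using \<rho> by (simp add: r_def)
  have ratio: "r j \<le> 2 * r (Suc j) \<and> r (Suc j) \<le> 2 * r j" if j: "j < K" for j
  proof (cases "Suc j < K")
    case True then show ?thesis using j by (simp add: r_def)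
  next
    case False
    then have K: "K = Suc j" using j by simp
    have "2^j < \<rho>" using K2 K by simp
    moreover have "\<rho> \<le> 2 * 2^j" using K1 K by simp
    ultimately show ?thesis using j K by (simp add: r_def)
  qed
  define I where "I = (\<integral>\<^sup>+ s\<in>{1..2*\<rho>}. M_sing u s * ennreal (1 / s) \<partial>lborel)"
  have S1: "(\<Sum>j<K. N_sing u (r j)) \<le> 3 * I"
  proof -
    have "(\<Sum>j<K. N_sing u (r j)) \<le> (\<Sum>j<K. M_sing u ((\<lambda>j. (2::real)^j) j))"
      by (intro sum_mono N_le_M) (auto simp: r_def)
    also have "\<dots> \<le> 3 * I" unfolding I_def
    proof (rule step_sum_le)
      fix i j assume "i \<in> {..<K}" "j \<in> {..<K}" "i < j"
      then have "(2::real)^(Suc i) \<le> 2^j" by (intro power_increasing) auto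
      then have "2 * (2::real)^i \<le> 2^j" by simp
      moreover have "(0::real) < 2^i" by simp
      ultimately show "3/2 * (2::real)^i < 2^j \<or> 3/2 * (2::real)^j < 2^i" by (intro disjI1) linarith
    next
      fix j assume j: "j \<in> {..<K}"
      have "(2::real)^j \<le> 2^(K-1)" using j by (intro power_increasing) auto
      moreover have Kp: "0 < K" using j by auto
      ultimately have "(2::real)^j < \<rho>" using K2[OF Kp] by linarith
      then show "1 \<le> (2::real)^j \<and> 3/2 * 2^j \<le> 2 * \<rho>" using \<rho> by (simp; linarith)
    qed (auto intro: M_mono)
    finally show ?thesis .
  qed
  have S2: "N_sing u \<rho> \<le> 3 * I"
  proof -
    have "N_sing u \<rho> \<le> (\<Sum>j\<in>{0::nat}. M_sing u ((\<lambda>_. \<rho>) j))"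
      using \<rho> by (simp add: N_le_M)
    also have "\<dots> \<le> 3 * I" unfolding I_def
      by (rule step_sum_le) (use \<rho> in \<open>auto intro: M_mono\<close>)
    finally show ?thesis .
  qed
  show ?thesis unfolding I_def[symmetric]
  proof (rule ennreal_le_epsilon)
    fix e :: real assume e: "0 < e"
    define \<epsilon> where "\<epsilon> = e / (9 * (real K + 1))"
    have \<epsilon>: "\<epsilon> > 0" using e by (simp add: \<epsilon>_def)
    have "\<forall>j. \<exists>P\<in>P_sing. wd (\<lambda>z. u z - P z) (r j) \<le> N_sing u (r j) + ennreal \<epsilon>"
      using pick[OF P1 \<epsilon>] by blast
    then obtain Pc where Pc: "\<And>j. Pc j \<in> P_sing" "\<And>j. wd (\<lambda>z. u z - Pc j z) (r j) \<le> N_sing u (r j) + ennreal \<epsilon>"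
      by metis
    define P where "P j = (if j = 0 then P1 else Pc j)" for j
    have PP: "\<And>j. P j \<in> P_sing" using Pc P1 by (simp add: P_def)
    have dj: "wd (\<lambda>z. u z - P j z) (r j) \<le> N_sing u (r j) + ennreal \<epsilon>" for j
    proof (cases "j = 0")
      case True then show ?thesis using d0 r0 by (simp add: P_def)
    next
      case False then show ?thesis using Pc(2)[of j] by (simp add: P_def)
    qed
    have "wd (\<lambda>z. u z - P1 z) \<rho> = wd (\<lambda>z. u z - P 0 z) (r K)" by (simp add: P_def rK)
    also have "\<dots> \<le> 9 * (\<Sum>j\<le>K. wd (\<lambda>z. u z - P j z) (r j))"
      by (rule chain[OF um]) (use PP rpos ratio in auto)
    also have "\<dots> \<le> 9 * (\<Sum>j\<le>K. N_sing u (r j) + ennreal \<epsilon>)"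
      by (intro mult_left_mono sum_mono dj) auto
    also have "9 * (\<Sum>j\<le>K. N_sing u (r j) + ennreal \<epsilon>) = 9 * ((\<Sum>j<K. N_sing u (r j)) + N_sing u \<rho> + ennreal ((real K + 1) * \<epsilon>))"
    proof -
      have "(\<Sum>j\<le>K. N_sing u (r j) + ennreal \<epsilon>) = (\<Sum>j\<le>K. N_sing u (r j)) + ennreal ((real K + 1) * \<epsilon>)"
        by (rule sum_eps) (use \<epsilon> in simp)
      moreover have "(\<Sum>j\<le>K. N_sing u (r j)) = (\<Sum>j<K. N_sing u (r j)) + N_sing u \<rho>"
        by (simp add: lessThan_Suc_atMost[symmetric] rK)
      ultimately show ?thesis by simp
    qed
    also have "\<dots> \<le> 9 * (3 * I + 3 * I + ennreal ((real K + 1) * \<epsilon>))"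
      by (intro mult_left_mono add_mono S1 S2) auto
    also have "9 * (3 * I + 3 * I + ennreal ((real K + 1) * \<epsilon>)) = 54 * I + ennreal e"
    proof -
      have a: "(9::ennreal) * ennreal ((real K + 1) * \<epsilon>) = ennreal e"
      proof -
        have r: "9 * ((real K + 1) * \<epsilon>) = e" unfolding \<epsilon>_def by (simp add: field_simps)
        have "ennreal e = ennreal 9 * ennreal ((real K + 1) * \<epsilon>)"
          unfolding r[symmetric] by (rule ennreal_mult) (use \<epsilon> in auto)
        then show ?thesis by simp
      qed
      have b: "(9::ennreal) * (3 * I + 3 * I) = 54 * I"
      proof -
        have "(3::ennreal) * I + 3 * I = 6 * I" by (simp add: distrib_right[symmetric])
        then show ?thesis by (simp add: mult.assoc[symmetric])
      qed
      show ?thesis using a b by (simp add: distrib_left)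
    qed
    also have "54 * I + ennreal e \<le> 108 * I + ennreal e"
      by (intro add_right_mono mult_right_mono) auto
    finally show "wd (\<lambda>z. u z - P1 z) \<rho> \<le> 108 * I + ennreal e" .
  qed
qed

lemma down_case:
  fixes u P1 :: "(real^'n)\<times>real \<Rightarrow> real"
  assumes um: "u \<in> borel_measurable lebesgue" and P1: "P1 \<in> P_sing"
    and d0: "wd (\<lambda>z. u z - P1 z) 1 = N_sing u 1"
    and \<rho>: "0 < \<rho>" "\<rho> \<le> 1"
  shows "wd (\<lambda>z. u z - P1 z) \<rho> \<le> 108 * (\<integral>\<^sup>+ s\<in>{2*\<rho>..3}. M_sing u s * ennreal (1 / s) \<partial>lborel)"
proof -
  have ex: "\<exists>l. (1/2::real)^(Suc l) < \<rho>"
  proof -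
    obtain n where n: "(1/2::real)^n < \<rho>" using real_arch_pow_inv[of \<rho> "1/2"] \<rho> by auto
    have "(1/2::real)^(Suc n) \<le> (1/2)^n" by (rule power_decreasing) auto
    then show ?thesis using n by (intro exI[of _ n]) linarith
  qed
  define L where "L = (LEAST l. (1/2::real)^(Suc l) < \<rho>)"
  have L1: "(1/2::real)^(Suc L) < \<rho>" unfolding L_def using ex by (rule LeastI_ex)
  have L2: "\<rho> \<le> (1/2::real)^L"
  proof (cases L)
    case 0 then show ?thesis using \<rho> by simp
  next
    case (Suc l)
    have "\<not> (1/2::real)^(Suc l) < \<rho>"
      using not_less_Least[of l "\<lambda>l. (1/2::real)^(Suc l) < \<rho>"] Suc unfolding L_def[symmetric] by simp
    then show ?thesis using Suc by simp
  qed
  define r where "r j = (1/2::real)^j" for j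
  have rpos: "\<And>j. r j > 0" by (simp add: r_def)
  have ratio: "\<And>j. r j \<le> 2 * r (Suc j) \<and> r (Suc j) \<le> 2 * r j" by (simp add: r_def)
  have R: "\<rho> \<le> r L" "r L \<le> 2 * \<rho>" using L1 L2 by (simp_all add: r_def)
  define I where "I = (\<integral>\<^sup>+ s\<in>{2*\<rho>..3}. M_sing u s * ennreal (1 / s) \<partial>lborel)"
  have S: "(\<Sum>j\<le>L. N_sing u (r j)) \<le> 3 * I"
  proof -
    have "(\<Sum>j\<le>L. N_sing u (r j)) \<le> (\<Sum>j\<le>L. M_sing u ((\<lambda>j. 2 * (1/2::real)^j) j))"
      by (intro sum_mono N_le_M) (auto simp: r_def)
    also have "\<dots> \<le> 3 * I" unfolding I_def
    proof (rule step_sum_le)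
      fix i j assume "i \<in> {..L}" "j \<in> {..L}" "i < j"
      then have "(1/2::real)^j \<le> (1/2)^(Suc i)" by (intro power_decreasing) auto
      then have "2 * (1/2::real)^j \<le> (1/2)^i" by simp
      moreover have "(0::real) < (1/2)^i" by simp
      ultimately show "3/2 * (2 * (1/2::real)^i) < 2 * (1/2)^j \<or> 3/2 * (2 * (1/2::real)^j) < 2 * (1/2)^i"
        by (intro disjI2) linarith
    next
      fix j assume j: "j \<in> {..L}"
      have "(1/2::real)^L \<le> (1/2)^j" using j by (intro power_decreasing) auto
      moreover have "(1/2::real)^j \<le> 1" by (rule power_le_one) auto
      ultimately show "2 * \<rho> \<le> 2 * (1/2::real)^j \<and> 3/2 * (2 * (1/2::real)^j) \<le> 3"
        using L2 by linarith
    qed (auto intro: M_mono)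
    finally show ?thesis .
  qed
  show ?thesis unfolding I_def[symmetric]
  proof (rule ennreal_le_epsilon)
    fix e :: real assume e: "0 < e"
    define \<epsilon> where "\<epsilon> = e / (36 * (real L + 1))"
    have \<epsilon>: "\<epsilon> > 0" using e by (simp add: \<epsilon>_def)
    have "\<forall>j. \<exists>P\<in>P_sing. wd (\<lambda>z. u z - P z) (r j) \<le> N_sing u (r j) + ennreal \<epsilon>"
      using pick[OF P1 \<epsilon>] by blast
    then obtain Pc where Pc: "\<And>j. Pc j \<in> P_sing" "\<And>j. wd (\<lambda>z. u z - Pc j z) (r j) \<le> N_sing u (r j) + ennreal \<epsilon>"
      by metis
    define P where "P j = (if j = 0 then P1 else Pc j)" for j
    have PP: "\<And>j. P j \<in> P_sing" using Pc P1 by (simp add: P_def)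
    have dj: "wd (\<lambda>z. u z - P j z) (r j) \<le> N_sing u (r j) + ennreal \<epsilon>" for j
    proof (cases "j = 0")
      case True then show ?thesis using d0 by (simp add: P_def r_def)
    next
      case False then show ?thesis using Pc(2)[of j] by (simp add: P_def)
    qed
    have "wd (\<lambda>z. u z - P1 z) \<rho> \<le> 4 * wd (\<lambda>z. u z - P1 z) (r L)"
      by (rule wd_mono) (use \<rho> R in auto)
    also have "wd (\<lambda>z. u z - P1 z) (r L) = wd (\<lambda>z. u z - P 0 z) (r L)" by (simp add: P_def)
    also have "4 * \<dots> \<le> 4 * (9 * (\<Sum>j\<le>L. wd (\<lambda>z. u z - P j z) (r j)))"
      by (intro mult_left_mono chain[OF um]) (use PP rpos ratio in auto)
    also have "\<dots> \<le> 4 * (9 * (\<Sum>j\<le>L. N_sing u (r j) + ennreal \<epsilon>))"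
      by (intro mult_left_mono sum_mono dj) auto
    also have "(\<Sum>j\<le>L. N_sing u (r j) + ennreal \<epsilon>) = (\<Sum>j\<le>L. N_sing u (r j)) + ennreal ((real L + 1) * \<epsilon>)"
      by (rule sum_eps) (use \<epsilon> in simp)
    also have "4 * (9 * ((\<Sum>j\<le>L. N_sing u (r j)) + ennreal ((real L + 1) * \<epsilon>))) \<le> 4 * (9 * (3 * I + ennreal ((real L + 1) * \<epsilon>)))"
      by (intro mult_left_mono add_mono S) auto
    also have "4 * (9 * (3 * I + ennreal ((real L + 1) * \<epsilon>))) = 108 * I + ennreal e"
    proof -
      have r: "36 * ((real L + 1) * \<epsilon>) = e" unfolding \<epsilon>_def by (simp add: field_simps)
      have "ennreal e = ennreal 36 * ennreal ((real L + 1) * \<epsilon>)"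
        unfolding r[symmetric] by (rule ennreal_mult) (use \<epsilon> in auto)
      then have a: "(36::ennreal) * ennreal ((real L + 1) * \<epsilon>) = ennreal e" by simp
      have "4 * (9 * (3 * I + ennreal ((real L + 1) * \<epsilon>))) = 108 * I + 36 * ennreal ((real L + 1) * \<epsilon>)"
        by (simp add: distrib_left mult.assoc[symmetric])
      then show ?thesis using a by simp
    qed
    finally show "wd (\<lambda>z. u z - P1 z) \<rho> \<le> 108 * I + ennreal e" .
  qed
qed

theorem lemma5p9:
  "\<exists>C::real. \<forall>(u :: (real ^ 'n) \<times> real \<Rightarrow> real) P1.
     u \<in> borel_measurable lebesgue \<longrightarrow>
     (\<forall>\<rho>>0. (\<integral>\<^sup>+ z \<in> S_cyl \<rho>. ennreal ((u z)\<^sup>2) \<partial>gamma_bar) < \<infinity>) \<longrightarrow>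
     P1 \<in> P_sing \<longrightarrow>
     N_sing u 1 = enn_sqrt (\<integral>\<^sup>+ z \<in> S_cyl 1. ennreal ((u z - P1 z)\<^sup>2) \<partial>gamma_bar) \<longrightarrow>
     (\<forall>\<rho>\<ge>1. weighted_dist u P1 \<rho> \<le>
          ennreal C * (\<integral>\<^sup>+ s \<in> {1..2*\<rho>}. M_sing u s * ennreal (1 / s) \<partial>lborel)) \<and>
     (\<forall>\<rho>. 0 < \<rho> \<and> \<rho> \<le> 1 \<longrightarrow> weighted_dist u P1 \<rho> \<le>
          ennreal C * (\<integral>\<^sup>+ s \<in> {2*\<rho>..3}. M_sing u s * ennreal (1 / s) \<partial>lborel))"
  proof (rule exI[of _ 108], intro allI impI)
  fix u P1 :: "(real ^ 'n) \<times> real \<Rightarrow> real"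
  assume um: "u \<in> borel_measurable lebesgue"
    and fin: "\<forall>\<rho>>0. (\<integral>\<^sup>+ z \<in> S_cyl \<rho>. ennreal ((u z)\<^sup>2) \<partial>gamma_bar) < \<infinity>"
    and P1: "P1 \<in> P_sing"
    and hN: "N_sing u 1 = enn_sqrt (\<integral>\<^sup>+ z \<in> S_cyl 1. ennreal ((u z - P1 z)\<^sup>2) \<partial>gamma_bar)"
  have d0: "wd (\<lambda>z. u z - P1 z) 1 = N_sing u 1" using hN unfolding wd_def by simp
  show "(\<forall>\<rho>\<ge>1. weighted_dist u P1 \<rho> \<le>
          ennreal 108 * (\<integral>\<^sup>+ s \<in> {1..2*\<rho>}. M_sing u s * ennreal (1 / s) \<partial>lborel)) \<and>
     (\<forall>\<rho>. 0 < \<rho> \<and> \<rho> \<le> 1 \<longrightarrow> weighted_dist u P1 \<rho> \<le>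
          ennreal 108 * (\<integral>\<^sup>+ s \<in> {2*\<rho>..3}. M_sing u s * ennreal (1 / s) \<partial>lborel))"
    using up_case[OF um P1 d0] down_case[OF um P1 d0] by (auto simp: weighted_dist_wd)
qed

end
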